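(* Let $\mathbf{X}\subseteq\mathbb{R}_+^n$ be an interval and $\mathrm{IC}(\mathbf{a}_0,\dots,\mathbf{a}_{n-1})$ an interval circulant matrix. Then $\mathrm{IC}(\mathbf{a}_0,\dots,\mathbf{a}_{n-1})$ is universally $\mathbf{X}$-robust, i.e. $x\in\mathrm{Attr}(A)$ for all $A\in\mathrm{IC}(\mathbf{a}_0,\dots,\mathbf{a}_{n-1})$ and all $x\in\mathbf{X}$, if and only if $x^{(j)}\in\mathrm{Attr}(A^{(i)})$ for all $i\in\{0,\dots,n-1\}$ and $j\in\{1,\dots,n\}$.
   Context: Max algebra on $\mathbb{R}_+$: $\oplus=\max$, ordinary product; $\lambda(A)$ greatest max-algebraic eigenvalue (maximum cycle geometric mean); $\mathrm{Attr}(A)=\{x\in\mathbb{R}_+^n: A^{t+1}\otimes x=\lambda(A)A^t\otimes x\text{ for some }t\ge0\}$. An interval $\mathbf{X}=\prod_i\mathbf{X}_i$ has each $\mathbf{X}_i\subseteq\mathbb{R}_+$ nonempty of one of the forms $[\underline{x}_i,\overline{x}_i]$, $(\underline{x}_i,\overline{x}_i)$, $(\underline{x}_i,\overline{x}_i]$, $[\underline{x}_i,\overline{x}_i)$; $x^{(k)}=(\underline{x}_1,\dots,\underline{x}_{k-1},\overline{x}_k,\underline{x}_{k+1},\dots,\underline{x}_n)$. $\mathrm{Circ}(a_0,\dots,a_{n-1})$ has entries $A_{i,j}=a_t$, $t\equiv j-i\pmod n$; $\mathrm{IC}(\mathbf{a}_0,\dots,\mathbf{a}_{n-1})$ is the set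 of all $\mathrm{Circ}(a_0,\dots,a_{n-1})$ with $a_t\in\mathbf{a}_t$, each $\mathbf{a}_t\subseteq\mathbb{R}_+$ a nonempty interval of one of the four forms with endpoints $\underline a_t\le\overline a_t$. $A^{(k)}=\mathrm{Circ}(\underline{a}_0,\dots,\underline{a}_{k-1},\overline{a}_k,\underline{a}_{k+1},\dots,\underline{a}_{n-1})$ for $k\in\{0,\dots,n-1\}$. *)

theory Defs
  imports Complex_Main
begin

text \<open>Vectors are \<open>nat \<Rightarrow> real\<close> and
  n x n matrices are \<open>nat \<Rightarrow> nat \<Rightarrow> real\<close>, indices ranging over \<open>{0..<n}\<close>.\<close>

definition mp_mv :: "nat \<Rightarrow> (nat \<Rightarrow> nat \<Rightarrow> real) \<Rightarrow> (nat \<Rightarrow> real) \<Rightarrow> nat \<Rightarrow> real" where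
  "mp_mv n A x = (\<lambda>i. Max ((\<lambda>j. A i j * x j) ` {..<n}))"

fun mp_pow_mv :: "nat \<Rightarrow> (nat \<Rightarrow> nat \<Rightarrow> real) \<Rightarrow> nat \<Rightarrow> (nat \<Rightarrow> real) \<Rightarrow> nat \<Rightarrow> real" where
  "mp_pow_mv n A 0 x = x"
| "mp_pow_mv n A (Suc t) x = mp_mv n A (mp_pow_mv n A t x)"

text \<open>Elementary cycles of the digraph on \<open>{0..<n}\<close>, as nonempty lists of distinct nodes.\<close>
definition cycle_gmean :: "(nat \<Rightarrow> nat \<Rightarrow> real) \<Rightarrow> nat list \<Rightarrow> real" where
  "cycle_gmean A cs = root (length cs)
     (\<Prod>l<length cs. A (cs ! l) (cs ! ((l + 1) mod length cs)))"

text \<open>Greatest max-algebraic eigenvalue = maximum cycle geometric mean.\<close>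
definition mp_lambda :: "nat \<Rightarrow> (nat \<Rightarrow> nat \<Rightarrow> real) \<Rightarrow> real" where
  "mp_lambda n A = Max (cycle_gmean A ` {cs. cs \<noteq> [] \<and> distinct cs \<and> set cs \<subseteq> {..<n}})"

definition attr :: "nat \<Rightarrow> (nat \<Rightarrow> nat \<Rightarrow> real) \<Rightarrow> (nat \<Rightarrow> real) \<Rightarrow> bool" where
  "attr n A x \<longleftrightarrow> (\<forall>i<n. 0 \<le> x i) \<and>
     (\<exists>t. \<forall>i<n. mp_pow_mv n A (Suc t) x i = mp_lambda n A * mp_pow_mv n A t x i)"

text \<open>A real interval given by (lower, upper, lower end closed?, upper end closed?).\<close>
type_synonym ivl = "real \<times> real \<times> bool \<times> bool"

definition lo :: "ivl \<Rightarrow> real" where "lo I = fst I"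
definition hi :: "ivl \<Rightarrow> real" where "hi I = fst (snd I)"

definition in_ivl :: "ivl \<Rightarrow> real \<Rightarrow> bool" where
  "in_ivl I v \<longleftrightarrow> (case I of (l, u, cl, cu) \<Rightarrow>
      (if cl then l \<le> v else l < v) \<and> (if cu then v \<le> u else v < u))"

definition valid_ivl :: "ivl \<Rightarrow> bool" where
  "valid_ivl I \<longleftrightarrow> 0 \<le> lo I \<and> lo I \<le> hi I \<and> (\<exists>v. in_ivl I v)"

definition circ :: "nat \<Rightarrow> (nat \<Rightarrow> real) \<Rightarrow> nat \<Rightarrow> nat \<Rightarrow> real" where
  "circ n a = (\<lambda>i j. a ((j + n - i) mod n))"

text \<open>\<open>x^{(k)}\<close> (0-indexed).\<close>
definition x_corner :: "(nat \<Rightarrow> ivl) \<Rightarrow> nat \<Rightarrow> nat \<Rightarrow> real" where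
  "x_corner X k = (\<lambda>i. if i = k then hi (X i) else lo (X i))"

definition A_corner :: "nat \<Rightarrow> (nat \<Rightarrow> ivl) \<Rightarrow> nat \<Rightarrow> nat \<Rightarrow> nat \<Rightarrow> real" where
  "A_corner n aI k = circ n (\<lambda>t. if t = k then hi (aI t) else lo (aI t))"

end

theory Submission
  imports Defs
begin


definition Mv :: "nat \<Rightarrow> (nat\<Rightarrow>real) \<Rightarrow> (nat\<Rightarrow>real) \<Rightarrow> nat \<Rightarrow> real" where
  "Mv n a z i = Max ((\<lambda>k. a k * z ((i+k) mod n)) ` {..<n})"

fun pw :: "nat \<Rightarrow> (nat\<Rightarrow>real) \<Rightarrow> nat \<Rightarrow> (nat\<Rightarrow>real) \<Rightarrow> nat \<Rightarrow> real" where
  "pw n a 0 y = y"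
| "pw n a (Suc t) y = Mv n a (pw n a t y)"

lemma mod_back: "(i::nat) < n \<Longrightarrow> k < n \<Longrightarrow> ((i+k) mod n + n - i) mod n = k"
proof -
  assume h: "i < n" "k < n"
  show ?thesis
  proof (cases "i + k < n")
    case True
    then have "(i+k) mod n = i+k" by simp
    moreover have "i + k + n - i = k + n" by simp
    ultimately show ?thesis using h by simp
  next
    case False
    then have "(i+k) mod n = i + k - n" using h by (simp add: mod_if)
    then show ?thesis using h False by simp
  qed
qed

lemma mod_fwd: "(i::nat) < n \<Longrightarrow> j < n \<Longrightarrow> (i + (j + n - i) mod n) mod n = j"
proof -
  assume h: "i < n" "j < n"
  have "(i + (j + n - i) mod n) mod n = (i + (j + n - i)) mod n" by (simp add: mod_simps)
  also have "i + (j + n - i) = j + n" using h by simp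
  finally show ?thesis using h by simp
qed

lemma mv_reindex:
  fixes n i :: nat and a z :: "nat \<Rightarrow> real"
  assumes "i < n"
  shows "Max ((\<lambda>j. a ((j+n-i) mod n) * z j) ` {..<n}) = Max ((\<lambda>k. a k * z ((i+k) mod n)) ` {..<n})"
proof -
  have "(\<lambda>j. a ((j+n-i) mod n) * z j) ` {..<n} = (\<lambda>k. a k * z ((i+k) mod n)) ` {..<n}"
  proof (rule set_eqI, rule iffI)
    fix v assume "v \<in> (\<lambda>j. a ((j+n-i) mod n) * z j) ` {..<n}"
    then obtain j where j: "j < n" "v = a ((j+n-i) mod n) * z j" by auto
    have "(j+n-i) mod n < n" using assms by (simp add: mod_less_divisor)
    moreover have "v = a ((j+n-i) mod n) * z ((i + (j+n-i) mod n) mod n)" using j mod_fwd[OF assms j(1)] by simp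
    ultimately show "v \<in> (\<lambda>k. a k * z ((i+k) mod n)) ` {..<n}" by blast
  next
    fix v assume "v \<in> (\<lambda>k. a k * z ((i+k) mod n)) ` {..<n}"
    then obtain k where k: "k < n" "v = a k * z ((i+k) mod n)" by auto
    have "(i+k) mod n < n" using assms by (simp add: mod_less_divisor)
    moreover have "v = a (((i+k) mod n + n - i) mod n) * z ((i+k) mod n)" using k mod_back[OF assms k(1)] by simp
    ultimately show "v \<in> (\<lambda>j. a ((j+n-i) mod n) * z j) ` {..<n}" by blast
  qed
  then show ?thesis by simp
qed

lemma pow_eq_pw: "i < n \<Longrightarrow> mp_pow_mv n (circ n a) t y i = pw n a t y i"
proof (induction t arbitrary: i)
  case 0 then show ?case by simp
next
  case (Suc t)
  have "mp_pow_mv n (circ n a) (Suc t) y i = Max ((\<lambda>j. a ((j+n-i) mod n) * pw n a t y j) ` {..<n})"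
    using Suc.IH by (simp add: mp_mv_def circ_def)
  also have "\<dots> = pw n a (Suc t) y i" using mv_reindex[OF Suc.prems] by (simp add: Mv_def)
  finally show ?case .
qed



lemma Mv_ge: "0 < n \<Longrightarrow> k < n \<Longrightarrow> a k * z ((i+k) mod n) \<le> Mv n a z i"
  unfolding Mv_def by (rule Max_ge) auto

lemma Mv_le: "0 < n \<Longrightarrow> (\<And>k. k < n \<Longrightarrow> a k * z ((i+k) mod n) \<le> c) \<Longrightarrow> Mv n a z i \<le> c"
  unfolding Mv_def by (rule Max.boundedI) auto

lemma Mv_ex: "0 < n \<Longrightarrow> \<exists>k<n. Mv n a z i = a k * z ((i+k) mod n)"
proof -
  assume n: "0 < n"
  have "Max ((\<lambda>k. a k * z ((i+k) mod n)) ` {..<n}) \<in> (\<lambda>k. a k * z ((i+k) mod n)) ` {..<n}"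
    by (rule Max_in) (use n in auto)
  then show ?thesis unfolding Mv_def by auto
qed

lemma Mv_cong: "0 < n \<Longrightarrow> (\<And>j. j < n \<Longrightarrow> z j = z' j) \<Longrightarrow> Mv n a z i = Mv n a z' i"
  unfolding Mv_def by (rule arg_cong[where f=Max]) (auto intro!: image_cong)

lemma Mv_nonneg: "0 < n \<Longrightarrow> (\<And>k. k < n \<Longrightarrow> 0 \<le> a k) \<Longrightarrow> (\<And>j. j < n \<Longrightarrow> 0 \<le> z j) \<Longrightarrow> 0 \<le> Mv n a z i"
proof -
  assume n: "0 < n" and a: "\<And>k. k < n \<Longrightarrow> 0 \<le> a k" and z: "\<And>j. j < n \<Longrightarrow> 0 \<le> z j"
  have "a 0 * z ((i+0) mod n) \<le> Mv n a z i" by (rule Mv_ge) (use n in auto)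
  moreover have "0 \<le> a 0 * z ((i+0) mod n)" using a[OF n] z[of "(i+0) mod n"] n by simp
  ultimately show ?thesis by linarith
qed

lemma Mv_mono: "0 < n \<Longrightarrow> (\<And>k. k < n \<Longrightarrow> 0 \<le> a k) \<Longrightarrow> (\<And>j. j < n \<Longrightarrow> z j \<le> z' j) \<Longrightarrow> Mv n a z i \<le> Mv n a z' i"
proof -
  assume n: "0 < n" and a: "\<And>k. k < n \<Longrightarrow> 0 \<le> a k" and z: "\<And>j. j < n \<Longrightarrow> z j \<le> z' j"
  show ?thesis
  proof (rule Mv_le[OF n])
    fix k assume k: "k < n"
    have "a k * z ((i+k) mod n) \<le> a k * z' ((i+k) mod n)"
      by (rule mult_left_mono) (use a k z n in auto)
    also have "\<dots> \<le> Mv n a z' i" by (rule Mv_ge[OF n k])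
    finally show "a k * z ((i+k) mod n) \<le> Mv n a z' i" .
  qed
qed

lemma Mv_hom: "0 < n \<Longrightarrow> 0 \<le> c \<Longrightarrow> Mv n a (\<lambda>j. c * z j) i = c * Mv n a z i"
proof (rule antisym)
  assume n: "0 < n" and c: "0 \<le> c"
  show "Mv n a (\<lambda>j. c * z j) i \<le> c * Mv n a z i"
  proof (rule Mv_le[OF n])
    fix k assume k: "k < n"
    have "a k * (c * z ((i+k) mod n)) = c * (a k * z ((i+k) mod n))" by simp
    also have "\<dots> \<le> c * Mv n a z i" by (rule mult_left_mono[OF Mv_ge[OF n k] c])
    finally show "a k * (c * z ((i+k) mod n)) \<le> c * Mv n a z i" .
  qed
  obtain k where k: "k < n" "Mv n a z i = a k * z ((i+k) mod n)" using Mv_ex[OF n] by blast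
  have "c * Mv n a z i = a k * (c * z ((i+k) mod n))" using k by simp
  also have "\<dots> \<le> Mv n a (\<lambda>j. c * z j) i" using Mv_ge[OF n k(1), of a "\<lambda>j. c * z j" i] by simp
  finally show "c * Mv n a z i \<le> Mv n a (\<lambda>j. c * z j) i" .
qed

lemma pw_nonneg: "0 < n \<Longrightarrow> (\<And>k. k < n \<Longrightarrow> 0 \<le> a k) \<Longrightarrow> (\<And>j. j < n \<Longrightarrow> 0 \<le> y j) \<Longrightarrow> j < n \<Longrightarrow> 0 \<le> pw n a t y j"
proof (induction t arbitrary: j)
  case 0 then show ?case by simp
next
  case (Suc t)
  have "0 \<le> Mv n a (pw n a t y) j"
    by (rule Mv_nonneg) (use Suc in auto)
  then show ?case by simp
qed

lemma pw_cong: "0 < n \<Longrightarrow> (\<And>j. j < n \<Longrightarrow> y j = y' j) \<Longrightarrow> i < n \<Longrightarrow> pw n a t y i = pw n a t y' i"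
proof (induction t arbitrary: i)
  case 0 then show ?case by simp
next
  case (Suc t)
  have "Mv n a (pw n a t y) i = Mv n a (pw n a t y') i"
    by (rule Mv_cong) (use Suc in auto)
  then show ?case by simp
qed

lemma pw_mono: "0 < n \<Longrightarrow> (\<And>k. k < n \<Longrightarrow> 0 \<le> a k) \<Longrightarrow> (\<And>j. j < n \<Longrightarrow> y j \<le> y' j) \<Longrightarrow> i < n \<Longrightarrow> pw n a t y i \<le> pw n a t y' i"
proof (induction t arbitrary: i)
  case 0 then show ?case by simp
next
  case (Suc t)
  have "Mv n a (pw n a t y) i \<le> Mv n a (pw n a t y') i"
    by (rule Mv_mono) (use Suc in auto)
  then show ?case by simp
qed

lemma pw_hom: "0 < n \<Longrightarrow> 0 \<le> c \<Longrightarrow> i < n \<Longrightarrow> pw n a t (\<lambda>j. c * y j) i = c * pw n a t y i"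
proof (induction t arbitrary: i)
  case 0 then show ?case by simp
next
  case (Suc t)
  have "pw n a (Suc t) (\<lambda>j. c * y j) i = Mv n a (\<lambda>j. c * pw n a t y j) i"
    unfolding pw.simps by (rule Mv_cong) (use Suc in auto)
  also have "\<dots> = c * pw n a (Suc t) y i" using Suc.prems by (simp add: Mv_hom)
  finally show ?case .
qed

lemma pw_add: "pw n a (t + m) y = pw n a t (pw n a m y)"
  by (induction t) auto

lemma pw_cmp:
  assumes n: "0 < n" and a: "\<And>k. k < n \<Longrightarrow> 0 \<le> a k" and a': "\<And>k. k < n \<Longrightarrow> 0 \<le> a' k"
    and l: "0 \<le> l" "0 \<le> l'" and c: "\<And>k. k < n \<Longrightarrow> l * a' k \<le> l' * a k"
    and y: "\<And>j. j < n \<Longrightarrow> 0 \<le> y j"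
  shows "i < n \<Longrightarrow> l ^ m * pw n a' m y i \<le> l' ^ m * pw n a m y i"
proof (induction m arbitrary: i)
  case 0 then show ?case by simp
next
  case (Suc m)
  obtain k where k: "k < n" "Mv n a' (pw n a' m y) i = a' k * pw n a' m y ((i+k) mod n)"
    using Mv_ex[OF n] by blast
  have j: "(i+k) mod n < n" using n by simp
  have p': "0 \<le> pw n a' m y ((i+k) mod n)" by (rule pw_nonneg[OF n a' y j])
  have p: "0 \<le> pw n a m y ((i+k) mod n)" by (rule pw_nonneg[OF n a y j])
  have "l ^ Suc m * pw n a' (Suc m) y i = (l * a' k) * (l ^ m * pw n a' m y ((i+k) mod n))"
    using k by (simp add: algebra_simps)
  also have "\<dots> \<le> (l' * a k) * (l' ^ m * pw n a m y ((i+k) mod n))"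
  proof (rule mult_mono)
    show "l * a' k \<le> l' * a k" by (rule c[OF k(1)])
    show "l ^ m * pw n a' m y ((i + k) mod n) \<le> l' ^ m * pw n a m y ((i + k) mod n)" by (rule Suc.IH[OF j])
    show "0 \<le> l' * a k" using l a[OF k(1)] by simp
    show "0 \<le> l ^ m * pw n a' m y ((i + k) mod n)" using l p' by simp
  qed
  also have "\<dots> = l' ^ Suc m * (a k * pw n a m y ((i+k) mod n))" by (simp add: algebra_simps)
  also have "\<dots> \<le> l' ^ Suc m * pw n a (Suc m) y i"
    using Mv_ge[OF n k(1), of a "pw n a m y" i] l by (simp add: mult_left_mono)
  finally show ?case .
qed



definition pterm :: "nat \<Rightarrow> (nat\<Rightarrow>real) \<Rightarrow> (nat\<Rightarrow>real) \<Rightarrow> nat \<Rightarrow> nat list \<Rightarrow> real" where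
  "pterm n a y i ks = prod_list (map a ks) * y ((i + sum_list ks) mod n)"

lemma pterm_Cons: "pterm n a y i (k # ks) = a k * pterm n a y ((i+k) mod n) ks"
  unfolding pterm_def by (simp add: mod_simps add.assoc)

lemma prod_list_nonneg: "(\<And>x. x \<in> set xs \<Longrightarrow> 0 \<le> (f::nat\<Rightarrow>real) x) \<Longrightarrow> 0 \<le> prod_list (map f (xs::nat list)) " 
  by (induction xs) auto

lemma prod_list_le_pow: "(\<And>x. x \<in> set xs \<Longrightarrow> 0 \<le> (f::nat\<Rightarrow>real) x \<and> f x \<le> (c::real)) \<Longrightarrow> prod_list (map f (xs::nat list)) \<le> c ^ length xs"
proof (induction xs)
  case Nil then show ?case by simp
next
  case (Cons x xs)
  have "f x * prod_list (map f xs) \<le> c * c ^ length xs"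
  proof (rule mult_mono)
    show "f x \<le> c" using Cons.prems by auto
    show "prod_list (map f xs) \<le> c ^ length xs" using Cons by auto
    show "0 \<le> c" using Cons.prems[of x] by auto
    show "0 \<le> prod_list (map f xs)" by (rule prod_list_nonneg) (use Cons.prems in auto)
  qed
  then show ?case by simp
qed

lemma path_le:
  assumes n: "0 < n" and a: "\<And>k. k < n \<Longrightarrow> 0 \<le> a k" and y: "\<And>j. j < n \<Longrightarrow> 0 \<le> y j"
  shows "set ks \<subseteq> {..<n} \<Longrightarrow> i < n \<Longrightarrow> pterm n a y i ks \<le> pw n a (length ks) y i"
proof (induction ks arbitrary: i)
  case Nil then show ?case by (simp add: pterm_def)
next
  case (Cons k ks)
  have k: "k < n" using Cons.prems by auto
  have j: "(i+k) mod n < n" using n by simp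
  have "pterm n a y i (k # ks) = a k * pterm n a y ((i+k) mod n) ks" by (rule pterm_Cons)
  also have "\<dots> \<le> a k * pw n a (length ks) y ((i+k) mod n)"
    by (rule mult_left_mono) (use Cons.IH[OF _ j] Cons.prems a[OF k] in auto)
  also have "\<dots> \<le> pw n a (length (k # ks)) y i" using Mv_ge[OF n k] by simp
  finally show ?case .
qed

lemma path_ex:
  assumes n: "0 < n"
  shows "i < n \<Longrightarrow> \<exists>ks. set ks \<subseteq> {..<n} \<and> length ks = t \<and> pw n a t y i = pterm n a y i ks"
proof (induction t arbitrary: i)
  case 0 then show ?case by (intro exI[of _ "[]"]) (simp add: pterm_def)
next
  case (Suc t)
  obtain k where k: "k < n" "Mv n a (pw n a t y) i = a k * pw n a t y ((i+k) mod n)"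
    using Mv_ex[OF n] by blast
  have j: "(i+k) mod n < n" using n by simp
  obtain ks where ks: "set ks \<subseteq> {..<n}" "length ks = t" "pw n a t y ((i+k) mod n) = pterm n a y ((i+k) mod n) ks"
    using Suc.IH[OF j] by blast
  show ?case
    by (intro exI[of _ "k # ks"]) (use k ks in \<open>simp add: pterm_Cons\<close>)
qed

lemma pigeon_block:
  fixes ks :: "nat list"
  assumes n: "0 < n" and len: "n \<le> length ks" and s: "s < n"
  shows "\<exists>j1 d. 0 < d \<and> j1 + d \<le> length ks \<and> sum_list (take d (drop j1 ks)) mod n = (d * s) mod n"
proof -
  define f where "f j = (sum_list (take j ks) + j * (n - s)) mod n" for j
  have "\<not> inj_on f {..n}"
  proof
    assume inj: "inj_on f {..n}"
    have "card (f ` {..n}) = Suc n" using card_image[OF inj] by simp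
    moreover have "f ` {..n} \<subseteq> {..<n}" unfolding f_def using n by auto
    then have "card (f ` {..n}) \<le> n" using card_mono[of "{..<n}"] by fastforce
    ultimately show False by simp
  qed
  then obtain j1 j2 where jj: "j1 \<le> n" "j2 \<le> n" "j1 \<noteq> j2" "f j1 = f j2"
    unfolding inj_on_def by auto
  obtain p q where pq: "p < q" "q \<le> n" "f p = f q"
    using jj by (metis linorder_neqE_nat)
  define d where "d = q - p"
  have d: "0 < d" "q = p + d" using pq unfolding d_def by auto
  have tk: "take q ks = take p ks @ take d (drop p ks)" using d(2) by (simp add: take_add)
  define A where "A = sum_list (take p ks)"
  define B where "B = sum_list (take d (drop p ks))"
  have tk': "sum_list (take q ks) = A + B" unfolding A_def B_def tk by simp
  have "f q = (A + B + (p + d) * (n - s)) mod n" unfolding f_def using tk' d(2) by simp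
  also have "A + B + (p + d) * (n - s) = (A + p * (n-s)) + (B + d * (n - s))" by (simp add: add_mult_distrib)
  finally have "(A + p * (n - s)) mod n = (A + p * (n-s) + (B + d * (n - s))) mod n"
    using pq(3) unfolding f_def A_def by simp
  then have "(B + d * (n - s)) mod n = 0"
    by (metis add_left_imp_eq le_add1 mod_eq_nat1E mod_mult_self1_is_0)
  then have "(B + d * (n - s) + d * s) mod n = (d * s) mod n"
    by (metis mod_add_left_eq add_0)
  moreover have "B + d * (n - s) + d * s = B + d * n"
  proof -
    have "d * s \<le> d * n" using s by simp
    moreover have "d * (n - s) = d * n - d * s" by (simp add: diff_mult_distrib2)
    ultimately show ?thesis by linarith
  qed
  ultimately have "B mod n = (d * s) mod n" by simp
  then show ?thesis using d pq len unfolding B_def by (intro exI[of _ p] exI[of _ d]) auto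
qed



lemma L1_le:
  assumes n: "0 < n" and a: "\<And>k. k < n \<Longrightarrow> 0 \<le> a k" and y: "\<And>j. j < n \<Longrightarrow> 0 \<le> y j"
    and s: "s < n" and mx: "\<And>k. k < n \<Longrightarrow> a k \<le> a s" and t: "n \<le> Suc t" and i: "i < n"
  shows "pw n a (Suc t) y i \<le> a s * pw n a t y ((i+s) mod n)"
proof -
  obtain ks where ks: "set ks \<subseteq> {..<n}" "length ks = Suc t" "pw n a (Suc t) y i = pterm n a y i ks"
    using path_ex[OF n i] by blast
  obtain p d where pd: "0 < d" "p + d \<le> length ks" "sum_list (take d (drop p ks)) mod n = (d * s) mod n"
    using pigeon_block[OF n _ s, of ks] t ks(2) by auto
  define R1 where "R1 = take p ks"
  define B where "B = take d (drop p ks)"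
  define R2 where "R2 = drop (p + d) ks"
  have ksd: "ks = R1 @ B @ R2" unfolding R1_def B_def R2_def
    by (metis append_take_drop_id drop_drop add.commute)
  have lenB: "length B = d" unfolding B_def using pd by auto
  define rest where "rest = R1 @ replicate (d - 1) s @ R2"
  have setks: "set R1 \<subseteq> {..<n}" "set B \<subseteq> {..<n}" "set R2 \<subseteq> {..<n}" using ks(1) ksd by auto
  have setrest: "set rest \<subseteq> {..<n}" unfolding rest_def using setks s by auto
  have lenrest: "length rest = t" using ks(2) ksd lenB pd(1) unfolding rest_def by auto
  have j: "(i+s) mod n < n" using n by simp
  have idx: "(i + sum_list ks) mod n = ((i+s) mod n + sum_list rest) mod n"
  proof -
    have "(i + sum_list ks) mod n = ((i + sum_list R1 + sum_list R2) + sum_list B) mod n"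
      unfolding ksd by (simp add: algebra_simps)
    also have "\<dots> = ((i + sum_list R1 + sum_list R2) + (d * s) mod n) mod n"
      unfolding B_def by (metis mod_add_right_eq pd(3))
    also have "\<dots> = (i + sum_list R1 + sum_list R2 + d * s) mod n" by (simp add: mod_add_right_eq)
    also have "d * s = s + (d - 1) * s" using pd(1) by (cases d) auto
    also have "(i + sum_list R1 + sum_list R2 + (s + (d - 1) * s)) mod n = ((i+s) mod n + sum_list rest) mod n"
    proof -
      have "sum_list rest = sum_list R1 + (d - 1) * s + sum_list R2" unfolding rest_def by (simp add: sum_list_replicate)
      moreover have "((i+s) mod n + sum_list rest) mod n = (i + s + sum_list rest) mod n" by (simp add: mod_add_left_eq)
      ultimately show ?thesis by (simp add: algebra_simps)
    qed
    finally show ?thesis .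
  qed
  have PB: "prod_list (map a B) \<le> a s ^ d"
    using prod_list_le_pow[of B a "a s"] setks(2) a mx lenB by auto
  have n1: "0 \<le> prod_list (map a R1)" by (rule prod_list_nonneg) (use setks a in auto)
  have n2: "0 \<le> prod_list (map a R2)" by (rule prod_list_nonneg) (use setks a in auto)
  have yv: "0 \<le> y ((i + sum_list ks) mod n)" using y n by simp
  have "pw n a (Suc t) y i = prod_list (map a R1) * prod_list (map a R2) * y ((i + sum_list ks) mod n) * prod_list (map a B)"
    using ks(3) unfolding pterm_def ksd by simp
  also have "\<dots> \<le> prod_list (map a R1) * prod_list (map a R2) * y ((i + sum_list ks) mod n) * a s ^ d"
    by (rule mult_left_mono[OF PB]) (use n1 n2 yv in simp)
  also have "\<dots> = a s * pterm n a y ((i+s) mod n) rest"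
  proof -
    have e1: "pterm n a y ((i+s) mod n) rest = prod_list (map a rest) * y ((i + sum_list ks) mod n)"
      unfolding pterm_def idx by simp
    have e2: "prod_list (map a rest) = prod_list (map a R1) * a s ^ (d - 1) * prod_list (map a R2)"
      unfolding rest_def by (simp add: prod_list_replicate)
    have e3: "a s ^ d = a s * a s ^ (d - 1)" using pd(1) by (cases d) auto
    show ?thesis unfolding e1 e2 e3 by (simp add: algebra_simps)
  qed
  also have "\<dots> \<le> a s * pw n a t y ((i+s) mod n)"
    using path_le[OF n a y setrest j] lenrest mx[OF s] a[OF s] by (simp add: mult_left_mono)
  finally show ?thesis .
qed

lemma L1:
  assumes n: "0 < n" and a: "\<And>k. k < n \<Longrightarrow> 0 \<le> a k" and y: "\<And>j. j < n \<Longrightarrow> 0 \<le> y j"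
    and s: "s < n" and mx: "\<And>k. k < n \<Longrightarrow> a k \<le> a s" and t: "n \<le> Suc t" and i: "i < n"
  shows "pw n a (Suc t) y i = a s * pw n a t y ((i+s) mod n)"
proof (rule antisym)
  show "pw n a (Suc t) y i \<le> a s * pw n a t y ((i+s) mod n)" by (rule L1_le[where n=n and a=a and y=y and s=s and t=t and i=i, OF n a y s mx t i])
  show "a s * pw n a t y ((i+s) mod n) \<le> pw n a (Suc t) y i" using Mv_ge[OF n s] by simp
qed

lemma L1_iter:
  assumes n: "0 < n" and a: "\<And>k. k < n \<Longrightarrow> 0 \<le> a k" and y: "\<And>j. j < n \<Longrightarrow> 0 \<le> y j"
    and s: "s < n" and mx: "\<And>k. k < n \<Longrightarrow> a k \<le> a s"
  shows "i < n \<Longrightarrow> pw n a (n - 1 + m) y i = a s ^ m * pw n a (n - 1) y ((i + m * s) mod n)"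
proof (induction m arbitrary: i)
  case 0 then show ?case by simp
next
  case (Suc m)
  have j: "(i+s) mod n < n" using n by simp
  have tt: "n \<le> Suc (n - 1 + m)" using n by simp
  have "pw n a (n - 1 + Suc m) y i = pw n a (Suc (n - 1 + m)) y i" by simp
  also have "\<dots> = a s * pw n a (n - 1 + m) y ((i+s) mod n)"
    by (rule L1[where n=n and a=a and y=y and s=s and t="n - 1 + m" and i=i, OF n a y s mx tt Suc.prems])
  also have "\<dots> = a s * (a s ^ m * pw n a (n - 1) y (((i+s) mod n + m * s) mod n))"
    using Suc.IH[OF j] by simp
  also have "((i+s) mod n + m * s) mod n = (i + Suc m * s) mod n" by (simp add: mod_simps algebra_simps)
  finally show ?case by simp
qed

lemma path_lower:
  assumes n: "0 < n" and a: "\<And>k. k < n \<Longrightarrow> 0 \<le> a k" and y: "\<And>j. j < n \<Longrightarrow> 0 \<le> y j"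
    and s: "s < n" and i: "i < n"
  shows "a s ^ t * y ((i + t * s) mod n) \<le> pw n a t y i"
proof -
  have "pterm n a y i (replicate t s) \<le> pw n a (length (replicate t s)) y i"
    by (rule path_le[OF n a y _ i]) (use s in auto)
  then show ?thesis unfolding pterm_def by (simp add: prod_list_replicate sum_list_replicate algebra_simps)
qed



lemma mA: "((i::nat) + (n+1)*s) mod n = (i+s) mod n"
proof -
  have "i + (n+1)*s = (i + s) + s * n" by (simp add: algebra_simps)
  then show ?thesis by (metis mod_mult_self1)
qed

lemma mB: "0 < n \<Longrightarrow> (j::nat) < n \<Longrightarrow> ((j + (n-1)*M*s) mod n + M*s) mod n = j"
proof -
  assume n: "0 < n" and j: "j < n"
  have "((j + (n-1)*M*s) mod n + M*s) mod n = (j + (n-1)*M*s + M*s) mod n" by (simp add: mod_add_left_eq)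
  also have "j + (n-1)*M*s + M*s = j + (M*s) * n" using n by (cases n) (auto simp: algebra_simps)
  finally show ?thesis using j by simp
qed

lemma mC: "0 < n \<Longrightarrow> ((j + (n-1)*M*s) mod n + (M+1)*s) mod n = ((j::nat)+s) mod n"
proof -
  assume n: "0 < n"
  have "((j + (n-1)*M*s) mod n + (M+1)*s) mod n = (j + (n-1)*M*s + (M+1)*s) mod n" by (simp add: mod_add_left_eq)
  also have "j + (n-1)*M*s + (M+1)*s = (j + s) + (M*s) * n" using n by (cases n) (auto simp: algebra_simps)
  finally show ?thesis by simp
qed

lemma mD: "(((r::nat)+s) mod n + s) mod n = (r + 2*s) mod n"
proof -
  have "(((r::nat)+s) mod n + s) mod n = (r + s + s) mod n" by (rule mod_add_left_eq)
  moreover have e: "r + s + s = r + 2*s" by simp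
  ultimately show ?thesis by metis
qed

lemma mE: "0 < n \<Longrightarrow> (r::nat) < n \<Longrightarrow> ((r+s) mod n + (n-1)*s) mod n = r"
proof -
  assume n: "0 < n" and r: "r < n"
  have "((r+s) mod n + (n-1)*s) mod n = (r + s + (n-1)*s) mod n" by (simp add: mod_add_left_eq)
  also have "r + s + (n-1)*s = r + s * n" using n by (cases n) (auto simp: algebra_simps)
  finally show ?thesis using r by simp
qed

lemma orbit:
  fixes u :: "nat \<Rightarrow> real"
  assumes n: "0 < n" and le: "\<And>i. i < n \<Longrightarrow> u i \<le> u ((i+s) mod n)"
  shows "i < n \<Longrightarrow> u ((i+s) mod n) = u i"
proof -
  assume i: "i < n"
  have gen: "u j \<le> u ((j + m*s) mod n)" if j: "j < n" for j m
  proof (induction m)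
    case 0 then show ?case using j by simp
  next
    case (Suc m)
    have "u ((j + m*s) mod n) \<le> u (((j + m*s) mod n + s) mod n)" by (rule le) (use n in simp)
    also have "((j + m*s) mod n + s) mod n = (j + m*s + s) mod n" by (rule mod_add_left_eq)
    also have "j + m*s + s = j + Suc m * s" by simp
    finally show ?case using Suc.IH by simp
  qed
  have "u ((i+s) mod n) \<le> u (((i+s) mod n + (n-1)*s) mod n)" by (rule gen) (use n in simp)
  also have "\<dots> = u i" using mE[OF n i] by simp
  finally show ?thesis using le[OF i] by simp
qed

lemma Mv_zero: "0 < n \<Longrightarrow> (\<And>k. k < n \<Longrightarrow> a k = 0) \<Longrightarrow> Mv n a z i = 0"
proof -
  assume n: "0 < n" and a: "\<And>k. k < n \<Longrightarrow> a k = 0"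
  have "Mv n a z i \<le> 0" by (rule Mv_le[OF n]) (simp add: a)
  moreover have "a 0 * z ((i+0) mod n) \<le> Mv n a z i" by (rule Mv_ge) (use n in auto)
  ultimately show ?thesis using a[OF n] by simp
qed

lemma C2:
  assumes n: "0 < n" and a: "\<And>k. k < n \<Longrightarrow> 0 \<le> a k" and y: "\<And>j. j < n \<Longrightarrow> 0 \<le> y j"
    and s: "s < n" and mx: "\<And>k. k < n \<Longrightarrow> a k \<le> a s"
  shows "(\<exists>t. \<forall>i<n. pw n a (Suc t) y i = a s * pw n a t y i) \<longleftrightarrow>
         (\<forall>r<n. a s ^ (n+1) * y r \<le> pw n a (n+1) y r)"
proof
  assume "\<exists>t. \<forall>i<n. pw n a (Suc t) y i = a s * pw n a t y i"
  then obtain t where t: "\<And>i. i < n \<Longrightarrow> pw n a (Suc t) y i = a s * pw n a t y i" by blast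
  show "\<forall>r<n. a s ^ (n+1) * y r \<le> pw n a (n+1) y r"
  proof (cases "a s = 0")
    case True
    show ?thesis
    proof (intro allI impI)
      fix r assume r: "r < n"
      have "0 \<le> pw n a (n+1) y r" by (rule pw_nonneg[where a=a and y=y, OF n a y r])
      then show "a s ^ (n+1) * y r \<le> pw n a (n+1) y r" using True n by simp
    qed
  next
    case False
    then have pos: "0 < a s" using a[OF s] by simp
    have pers: "\<And>i. i < n \<Longrightarrow> pw n a (Suc (t+m)) y i = a s * pw n a (t+m) y i" for m
    proof (induction m)
      case 0 then show ?case using t by simp
    next
      case (Suc m)
      have "pw n a (Suc (t + Suc m)) y i = Mv n a (\<lambda>j. a s * pw n a (t+m) y j) i"
        unfolding add_Suc_right pw.simps(2)[of n a "Suc (t+m)"]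
        by (rule Mv_cong[OF n]) (use Suc.IH in simp)
      also have "\<dots> = a s * pw n a (t + Suc m) y i" using Mv_hom[OF n] a[OF s] by simp
      finally show ?case .
    qed
    define u where "u = pw n a (n - 1) y"
    define M where "M = Suc t"
    have inv0: "u ((i + (M+1)*s) mod n) = u ((i + M*s) mod n)" if i: "i < n" for i
    proof -
      have e: "n - 1 + (M + 1) = Suc (t + n)" "n - 1 + M = t + n" using n unfolding M_def by auto
      have "a s ^ (M+1) * u ((i + (M+1)*s) mod n) = pw n a (n - 1 + (M+1)) y i"
        unfolding u_def by (rule L1_iter[where a=a and y=y, OF n a y s mx i, symmetric])
      also have "\<dots> = a s * pw n a (n - 1 + M) y i" using pers[OF i, of n] e by simp
      also have "\<dots> = a s * (a s ^ M * u ((i + M*s) mod n))"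
        unfolding u_def using L1_iter[where a=a and y=y, OF n a y s mx i, of M] by simp
      finally show ?thesis using pos by simp
    qed
    have inv: "u ((j+s) mod n) = u j" if j: "j < n" for j
    proof -
      define i where "i = (j + (n-1)*M*s) mod n"
      have i: "i < n" unfolding i_def using n by simp
      show ?thesis using inv0[OF i] mB[OF n j, of M s] mC[OF n, of j M s] unfolding i_def by simp
    qed
    show ?thesis
    proof (intro allI impI)
      fix r assume r: "r < n"
      have rs: "(r+s) mod n < n" using n by simp
      have "pw n a (n+1) y r = pw n a (n - 1 + 2) y r" using n by (simp add: numeral_2_eq_2)
      also have "\<dots> = a s ^ 2 * u ((r + 2*s) mod n)" unfolding u_def by (rule L1_iter[where a=a and y=y, OF n a y s mx r])
      also have "u ((r + 2*s) mod n) = u ((r+s) mod n)" using inv[OF rs] mD[of r s n] by simp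
      finally have e: "pw n a (n+1) y r = a s ^ 2 * u ((r+s) mod n)" .
      have "a s ^ (n-1) * y r \<le> u ((r+s) mod n)"
        using path_lower[where a=a and y=y, OF n a y s rs, of "n-1"] mE[OF n r, of s] unfolding u_def by simp
      then have "a s ^ 2 * (a s ^ (n-1) * y r) \<le> a s ^ 2 * u ((r+s) mod n)"
        using pos by simp
      moreover have "a s ^ 2 * (a s ^ (n-1) * y r) = a s ^ (n+1) * y r"
      proof -
        have "2 + (n-1) = n+1" using n by simp
        have "a s ^ 2 * a s ^ (n-1) = a s ^ (2 + (n-1))" by (rule power_add[symmetric])
        then have "a s ^ 2 * a s ^ (n-1) = a s ^ (n+1)" using \<open>2 + (n-1) = n+1\<close> by simp
        then show ?thesis by (simp add: mult.assoc[symmetric])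
      qed
      ultimately show "a s ^ (n+1) * y r \<le> pw n a (n+1) y r" using e by linarith
    qed
  qed
next
  assume h: "\<forall>r<n. a s ^ (n+1) * y r \<le> pw n a (n+1) y r"
  show "\<exists>t. \<forall>i<n. pw n a (Suc t) y i = a s * pw n a t y i"
  proof (cases "a s = 0")
    case True
    then have z: "\<And>k. k < n \<Longrightarrow> a k = 0" using a mx by (metis order.antisym)
    show ?thesis by (intro exI[of _ 0]) (simp add: Mv_zero[OF n z] True)
  next
    case False
    then have pos: "0 < a s" using a[OF s] by simp
    define u where "u = pw n a (n - 1) y"
    have le: "u i \<le> u ((i+s) mod n)" if i: "i < n" for i
    proof -
      have "pw n a (n-1) (\<lambda>r. a s ^ (n+1) * y r) i \<le> pw n a (n-1) (pw n a (n+1) y) i"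
        using pw_mono[where a=a and y="\<lambda>r. a s ^ (n+1) * y r" and y'="pw n a (n+1) y", OF n a _ i] h by blast
      moreover have "pw n a (n-1) (\<lambda>r. a s ^ (n+1) * y r) i = a s ^ (n+1) * u i"
        unfolding u_def by (rule pw_hom[OF n _ i]) (use pos in simp)
      moreover have "pw n a (n-1) (pw n a (n+1) y) i = a s ^ (n+1) * u ((i + (n+1)*s) mod n)"
        unfolding u_def pw_add[symmetric] by (rule L1_iter[where a=a and y=y, OF n a y s mx i])
      ultimately have "a s ^ (n+1) * u i \<le> a s ^ (n+1) * u ((i+s) mod n)" using mA[of i n s] by simp
      then show ?thesis using pos by simp
    qed
    have inv: "\<And>i. i < n \<Longrightarrow> u ((i+s) mod n) = u i" by (rule orbit[where u=u and s=s, OF n le])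
    show ?thesis
    proof (intro exI[of _ "n-1"] allI impI)
      fix i assume i: "i < n"
      have tt: "n \<le> Suc (n-1)" by linarith
      have "pw n a (Suc (n-1)) y i = a s * pw n a (n-1) y ((i+s) mod n)"
        by (rule L1[where a=a and y=y, OF n a y s mx tt i])
      then show "pw n a (Suc (n-1)) y i = a s * pw n a (n-1) y i" using inv[OF i] unfolding u_def by simp
    qed
  qed
qed



lemma mod_cancel_nat: "((A::nat) + c) mod n = (B + c) mod n \<Longrightarrow> A mod n = B mod n"
  by (simp add: nat_mod_eq_iff)

lemma mod_zero_diff: "(X::nat) mod n = (X + Y) mod n \<Longrightarrow> Y mod n = 0"
  by (metis add_left_imp_eq le_add1 mod_eq_nat1E mod_mult_self1_is_0)

lemma lambda_circ:
  fixes a :: "nat \<Rightarrow> real"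
  assumes n: "0 < n" and a: "\<And>k. k < n \<Longrightarrow> 0 \<le> a k"
  shows "mp_lambda n (circ n a) = Max (a ` {..<n})"
proof -
  define M where "M = Max (a ` {..<n})"
  have "M \<in> a ` {..<n}" unfolding M_def by (rule Max_in) (use n in auto)
  then obtain s where s: "s < n" "a s = M" by auto
  have aM: "a k \<le> M" if "k < n" for k unfolding M_def using that by auto
  have M0: "0 \<le> M" using a[OF s(1)] s(2) by simp
  define C where "C = {cs. cs \<noteq> [] \<and> distinct cs \<and> set cs \<subseteq> {..<n}}"
  have finC: "finite C"
  proof -
    have "C \<subseteq> {xs. set xs \<subseteq> {..<n} \<and> length xs \<le> n}"
    proof
      fix xs assume "xs \<in> C"
      then have h: "distinct xs" "set xs \<subseteq> {..<n}" unfolding C_def by auto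
      have "length xs = card (set xs)" using distinct_card[OF h(1)] by simp
      also have "\<dots> \<le> card {..<n}" by (rule card_mono) (use h in auto)
      finally show "xs \<in> {xs. set xs \<subseteq> {..<n} \<and> length xs \<le> n}" using h by simp
    qed
    then show ?thesis using finite_lists_length_le[of "{..<n}" n] finite_subset by blast
  qed
  have circ_idx: "circ n a i j = a ((j + n - i) mod n)" for i j unfolding circ_def by simp
  have upper: "cycle_gmean (circ n a) cs \<le> M" if cs: "cs \<in> C" for cs
  proof -
    define L where "L = length cs"
    have L: "0 < L" using cs unfolding C_def L_def by auto
    have "(\<Prod>l<L. circ n a (cs ! l) (cs ! ((l + 1) mod L))) \<le> (\<Prod>l<L. M)"
    proof (rule prod_mono)
      fix l assume "l \<in> {..<L}"
      have idx: "(cs ! ((l + 1) mod L) + n - cs ! l) mod n < n" using n by simp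
      show "0 \<le> circ n a (cs ! l) (cs ! ((l + 1) mod L)) \<and> circ n a (cs ! l) (cs ! ((l + 1) mod L)) \<le> M"
        unfolding circ_idx using a[OF idx] aM[OF idx] by simp
    qed
    also have "(\<Prod>l<L. M) = M ^ L" by simp
    finally have "root L (\<Prod>l<L. circ n a (cs ! l) (cs ! ((l + 1) mod L))) \<le> root L (M ^ L)"
      by (rule real_root_le_mono[OF L])
    also have "root L (M ^ L) = M" using real_root_pos2[OF L M0] .
    finally show ?thesis unfolding cycle_gmean_def L_def .
  qed
  define p where "p = (LEAST p. 0 < p \<and> (p * s) mod n = 0)"
  have pex: "0 < n \<and> (n * s) mod n = 0" using n by simp
  have p0: "0 < p \<and> (p * s) mod n = 0" unfolding p_def by (rule LeastI[of _ n]) (rule pex)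
  have p: "0 < p" "(p * s) mod n = 0" using p0 by auto
  have pmin: "(q * s) mod n \<noteq> 0" if q: "0 < q" "q < p" for q
  proof -
    have "\<not> (0 < q \<and> (q * s) mod n = 0)" using q(2) unfolding p_def by (rule not_less_Least)
    then show ?thesis using q(1) by simp
  qed
  define cs where "cs = map (\<lambda>l. (l * s) mod n) [0..<p]"
  have lencs: "length cs = p" unfolding cs_def by simp
  have csC: "cs \<in> C"
  proof -
    have "distinct cs" unfolding cs_def distinct_map
    proof
      show "distinct [0..<p]" by simp
      show "inj_on (\<lambda>l. l * s mod n) (set [0..<p])"
      proof (rule inj_onI)
        fix x y assume xy: "x \<in> set [0..<p]" "y \<in> set [0..<p]" "x * s mod n = y * s mod n"
        show "x = y"
        proof (rule ccontr)
          assume ne: "x \<noteq> y"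
          have gen: "False" if "u < v" "v < p" "u * s mod n = v * s mod n" for u v
          proof -
            have "v * s = u * s + (v - u) * s" using that(1) by (simp add: diff_mult_distrib)
            then have "((v - u) * s) mod n = 0" using mod_zero_diff[of "u*s" n "(v-u)*s"] that(3) by simp
            then show False using pmin[of "v - u"] that by simp
          qed
          show False
          proof (cases "x < y")
            case True then show False using xy gen[of x y] by auto
          next
            case False then have "y < x" using ne by simp
            then show False using xy gen[of y x] by auto
          qed
        qed
      qed
    qed
    moreover have "cs \<noteq> []" using p(1) lencs by auto
    moreover have "set cs \<subseteq> {..<n}" unfolding cs_def using n by auto
    ultimately show ?thesis unfolding C_def by simp
  qed
  have edge: "circ n a (cs ! l) (cs ! ((l + 1) mod p)) = M" if l: "l < p" for l
  proof -
    define x where "x = (l * s) mod n"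
    define x' where "x' = (((l + 1) mod p) * s) mod n"
    have csl: "cs ! l = x" "cs ! ((l + 1) mod p) = x'" unfolding cs_def x_def x'_def using l p(1) by auto
    have x: "x < n" unfolding x_def using n by simp
    have x'c: "x' mod n = ((l + 1) * s) mod n"
    proof (cases "l + 1 < p")
      case True then show ?thesis unfolding x'_def by simp
    next
      case False
      then have "l + 1 = p" using l by simp
      then show ?thesis unfolding x'_def using p(2) by simp
    qed
    have "((x' + n - x) + x) mod n = (s + x) mod n"
    proof -
      have "(x' + n - x) + x = x' + 1 * n" using x by simp
      then have "((x' + n - x) + x) mod n = x' mod n" by (metis mod_mult_self1 mult.commute)
      also have "\<dots> = ((l + 1) * s) mod n" by (rule x'c)
      also have "(l + 1) * s = s + l * s" by simp
      also have "(s + l * s) mod n = (s + x) mod n" unfolding x_def by (simp add: mod_add_right_eq)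
      finally show ?thesis .
    qed
    then have "(x' + n - x) mod n = s mod n" by (rule mod_cancel_nat)
    then show ?thesis unfolding circ_idx csl using s by simp
  qed
  have gm: "cycle_gmean (circ n a) cs = M"
  proof -
    have "(\<Prod>l<p. circ n a (cs ! l) (cs ! ((l + 1) mod p))) = (\<Prod>l<p. M)"
      by (rule prod.cong) (use edge in auto)
    then show ?thesis unfolding cycle_gmean_def lencs using real_root_pos2[OF p(1) M0] by simp
  qed
  have "Max (cycle_gmean (circ n a) ` C) = M"
  proof (rule Max_eqI)
    show "finite (cycle_gmean (circ n a) ` C)" using finC by simp
    show "\<And>y. y \<in> cycle_gmean (circ n a) ` C \<Longrightarrow> y \<le> M" using upper by auto
    show "M \<in> cycle_gmean (circ n a) ` C" using csC gm by force
  qed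
  then show ?thesis unfolding mp_lambda_def C_def M_def by simp
qed



lemma in_ivl_bounds: "in_ivl I v \<Longrightarrow> lo I \<le> v \<and> v \<le> hi I"
  unfolding in_ivl_def lo_def hi_def by (cases I) (auto split: if_splits)

definition lseq :: "ivl \<Rightarrow> nat \<Rightarrow> real" where
  "lseq I k = lo I + (hi I - lo I) * inverse (real (Suc (Suc k)))"
definition hseq :: "ivl \<Rightarrow> nat \<Rightarrow> real" where
  "hseq I k = hi I - (hi I - lo I) * inverse (real (Suc (Suc k)))"

lemma seq_in:
  assumes v: "valid_ivl I"
  shows "in_ivl I (lseq I k) \<and> in_ivl I (hseq I k)"
proof -
  obtain l u cl cu where I: "I = (l, u, cl, cu)" by (cases I) auto
  have lu: "l \<le> u" and ex: "\<exists>v. in_ivl I v" using v unfolding valid_ivl_def I lo_def hi_def by auto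
  show ?thesis
  proof (cases "l < u")
    case True
    have i0: "0 < inverse (real (Suc (Suc k)))" by simp
    have i1: "inverse (real (Suc (Suc k))) < 1" by (rule inverse_less_1_iff[THEN iffD2]) simp
    have d: "0 < (u - l) * inverse (real (Suc (Suc k)))" using True i0 by simp
    have d2: "(u - l) * inverse (real (Suc (Suc k))) < u - l"
      using mult_strict_left_mono[OF i1, of "u - l"] True by simp
    have "l < lseq I k" "lseq I k < u" "l < hseq I k" "hseq I k < u"
      unfolding lseq_def hseq_def I lo_def hi_def using d d2 by auto
    then show ?thesis unfolding in_ivl_def I by auto
  next
    case False
    then have eq: "u = l" using lu by simp
    obtain v0 where v0: "in_ivl I v0" using ex by blast
    have "cl \<and> cu" using v0 eq unfolding in_ivl_def I by (auto split: if_splits)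
    then show ?thesis unfolding in_ivl_def lseq_def hseq_def I lo_def hi_def using eq by auto
  qed
qed

lemma seq_lim: "(lseq I \<longlongrightarrow> lo I) sequentially" "(hseq I \<longlongrightarrow> hi I) sequentially"
proof -
  have z: "(\<lambda>k. (hi I - lo I) * inverse (real (Suc (Suc k)))) \<longlonglongrightarrow> 0"
  proof -
    have "(\<lambda>k. inverse (real (Suc (Suc k)))) \<longlonglongrightarrow> 0"
      using LIMSEQ_Suc[OF LIMSEQ_inverse_real_of_nat] .
    then show ?thesis using tendsto_mult[OF tendsto_const, of _ 0 sequentially "hi I - lo I"] by simp
  qed
  show "(lseq I \<longlongrightarrow> lo I) sequentially" unfolding lseq_def using tendsto_add[OF tendsto_const z] by simp
  show "(hseq I \<longlongrightarrow> hi I) sequentially" unfolding hseq_def using tendsto_diff[OF tendsto_const z] by simp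
qed

lemma Max_tendsto:
  fixes f :: "nat \<Rightarrow> 'b \<Rightarrow> real"
  assumes "finite K" "K \<noteq> {}"
  shows "(\<And>k. k \<in> K \<Longrightarrow> ((\<lambda>x. f x k) \<longlongrightarrow> L k) sequentially) \<Longrightarrow>
         ((\<lambda>x. Max ((f x) ` K)) \<longlongrightarrow> Max (L ` K)) sequentially"
  using assms(1,2)
proof (induction K rule: finite_ne_induct)
  case (singleton k) then show ?case by simp
next
  case (insert k K)
  have "((\<lambda>x. max (f x k) (Max ((f x) ` K))) \<longlongrightarrow> max (L k) (Max (L ` K))) sequentially"
    by (rule tendsto_max) (use insert in auto)
  then show ?case using insert by simp
qed

lemma pw_tendsto:
  assumes n: "0 < n"
    and A: "\<And>t. t < n \<Longrightarrow> ((\<lambda>k. A k t) \<longlongrightarrow> a t) sequentially"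
    and Y: "\<And>m. m < n \<Longrightarrow> ((\<lambda>k. Y k m) \<longlongrightarrow> y m) sequentially"
  shows "i < n \<Longrightarrow> ((\<lambda>k. pw n (A k) T (Y k) i) \<longlongrightarrow> pw n a T y i) sequentially"
proof (induction T arbitrary: i)
  case 0 then show ?case using Y by simp
next
  case (Suc T)
  have "((\<lambda>k. Max ((\<lambda>t. A k t * pw n (A k) T (Y k) ((i+t) mod n)) ` {..<n}))
          \<longlongrightarrow> Max ((\<lambda>t. a t * pw n a T y ((i+t) mod n)) ` {..<n})) sequentially"
  proof (rule Max_tendsto[where f="\<lambda>k t. A k t * pw n (A k) T (Y k) ((i+t) mod n)"])
    fix t assume t: "t \<in> {..<n}"
    have j: "(i+t) mod n < n" using n by simp
    show "((\<lambda>k. A k t * pw n (A k) T (Y k) ((i+t) mod n)) \<longlongrightarrow> a t * pw n a T y ((i+t) mod n)) sequentially"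
      by (rule tendsto_mult) (use A t Suc.IH[OF j] in auto)
  qed (use n in auto)
  then show ?case by (simp add: Mv_def)
qed

lemma attr_iff:
  assumes n: "0 < n" and a: "\<And>k. k < n \<Longrightarrow> 0 \<le> a k" and y: "\<And>j. j < n \<Longrightarrow> 0 \<le> y j"
  shows "attr n (circ n a) y \<longleftrightarrow> (\<forall>r<n. Max (a ` {..<n}) ^ (n+1) * y r \<le> pw n a (n+1) y r)"
proof -
  have "Max (a ` {..<n}) \<in> a ` {..<n}" by (rule Max_in) (use n in auto)
  then obtain s where s: "s < n" "a s = Max (a ` {..<n})" by auto
  have mx: "\<And>k. k < n \<Longrightarrow> a k \<le> a s" using s(2) by simp
  have "attr n (circ n a) y \<longleftrightarrow> (\<exists>t. \<forall>i<n. pw n a (Suc t) y i = a s * pw n a t y i)"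
    unfolding attr_def using y
    by (auto simp del: mp_pow_mv.simps simp: pow_eq_pw lambda_circ[OF n a] s(2)[symmetric])
  also have "\<dots> \<longleftrightarrow> (\<forall>r<n. a s ^ (n+1) * y r \<le> pw n a (n+1) y r)"
    by (rule C2[where a=a and y=y, OF n a y s(1) mx])
  finally show ?thesis using s(2) by simp
qed



theorem theorem4:
  fixes n :: nat and X aI :: "nat \<Rightarrow> ivl"
  assumes "1 \<le> n"
    and "\<forall>i<n. valid_ivl (X i)"
    and "\<forall>t<n. valid_ivl (aI t)"
  shows "(\<forall>a. (\<forall>t<n. in_ivl (aI t) (a t)) \<longrightarrow>
            (\<forall>x. (\<forall>i<n. in_ivl (X i) (x i)) \<longrightarrow> attr n (circ n a) x))
     \<longleftrightarrow> (\<forall>i<n. \<forall>j<n. attr n (A_corner n aI i) (x_corner X j))"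
proof -
  have n: "0 < n" using assms(1) by simp
  have vX: "\<And>i. i < n \<Longrightarrow> valid_ivl (X i)" and vA: "\<And>t. t < n \<Longrightarrow> valid_ivl (aI t)" using assms by auto
  have lo0: "\<And>I. valid_ivl I \<Longrightarrow> 0 \<le> lo I" and lohi: "\<And>I. valid_ivl I \<Longrightarrow> lo I \<le> hi I"
    unfolding valid_ivl_def by auto
  show ?thesis
  proof
    assume L: "\<forall>a. (\<forall>t<n. in_ivl (aI t) (a t)) \<longrightarrow>
            (\<forall>x. (\<forall>i<n. in_ivl (X i) (x i)) \<longrightarrow> attr n (circ n a) x)"
    show "\<forall>i<n. \<forall>j<n. attr n (A_corner n aI i) (x_corner X j)"
    proof (intro allI impI)
      fix i j assume i: "i < n" and j: "j < n"
      define a' where "a' = (\<lambda>t. if t = i then hi (aI t) else lo (aI t))"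
      define y' where "y' = x_corner X j"
      define ak where "ak = (\<lambda>k t. if t = i then hseq (aI t) k else lseq (aI t) k)"
      define yk where "yk = (\<lambda>k m. if m = j then hseq (X m) k else lseq (X m) k)"
      have a'0: "0 \<le> a' t" if t: "t < n" for t
        using lo0[OF vA[OF t]] lohi[OF vA[OF t]] unfolding a'_def by (cases "t = i") auto
      have y'0: "0 \<le> y' m" if m: "m < n" for m
        using lo0[OF vX[OF m]] lohi[OF vX[OF m]] unfolding y'_def x_corner_def by (cases "m = j") auto
      have akin: "in_ivl (aI t) (ak k t)" if t: "t < n" for k t
        unfolding ak_def using seq_in[OF vA[OF t]] by (cases "t = i") auto
      have ykin: "in_ivl (X m) (yk k m)" if m: "m < n" for k m
        unfolding yk_def using seq_in[OF vX[OF m]] by (cases "m = j") auto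
      have ak0: "0 \<le> ak k t" if t: "t < n" for k t
        using in_ivl_bounds[OF akin[OF t, of k]] lo0[OF vA[OF t]] by linarith
      have yk0: "0 \<le> yk k m" if m: "m < n" for k m
        using in_ivl_bounds[OF ykin[OF m, of k]] lo0[OF vX[OF m]] by linarith
      have Pk: "\<And>k r. r < n \<Longrightarrow> Max (ak k ` {..<n}) ^ (n+1) * yk k r \<le> pw n (ak k) (n+1) (yk k) r"
      proof -
        fix k r assume r: "r < n"
        have "attr n (circ n (ak k)) (yk k)" using L akin ykin by blast
        then show "Max (ak k ` {..<n}) ^ (n+1) * yk k r \<le> pw n (ak k) (n+1) (yk k) r"
          using attr_iff[OF n, of "ak k" "yk k"] ak0 yk0 r by blast
      qed
      have limA: "\<And>t. ((\<lambda>k. ak k t) \<longlongrightarrow> a' t) sequentially"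
        unfolding ak_def a'_def using seq_lim by auto
      have limY: "\<And>m. ((\<lambda>k. yk k m) \<longlongrightarrow> y' m) sequentially"
        unfolding yk_def y'_def x_corner_def using seq_lim by auto
      have "\<forall>r<n. Max (a' ` {..<n}) ^ (n+1) * y' r \<le> pw n a' (n+1) y' r"
      proof (intro allI impI)
        fix r assume r: "r < n"
        have l1: "((\<lambda>k. Max (ak k ` {..<n}) ^ (n+1) * yk k r) \<longlongrightarrow> Max (a' ` {..<n}) ^ (n+1) * y' r) sequentially"
        proof (intro tendsto_mult tendsto_power limY)
          show "((\<lambda>k. Max (ak k ` {..<n})) \<longlongrightarrow> Max (a' ` {..<n})) sequentially"
            by (rule Max_tendsto[where f=ak]) (use limA n in auto)
        qed
        have l2: "((\<lambda>k. pw n (ak k) (n+1) (yk k) r) \<longlongrightarrow> pw n a' (n+1) y' r) sequentially"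
          by (rule pw_tendsto[OF n _ _ r]) (use limA limY in auto)
        show "Max (a' ` {..<n}) ^ (n+1) * y' r \<le> pw n a' (n+1) y' r"
          by (rule tendsto_le[OF _ l2 l1]) (use Pk r in auto)
      qed
      then have "attr n (circ n a') y'" using attr_iff[OF n, of a' y'] a'0 y'0 by blast
      then show "attr n (A_corner n aI i) (x_corner X j)" unfolding A_corner_def a'_def y'_def .
    qed
  next
    assume R: "\<forall>i<n. \<forall>j<n. attr n (A_corner n aI i) (x_corner X j)"
    show "\<forall>a. (\<forall>t<n. in_ivl (aI t) (a t)) \<longrightarrow>
            (\<forall>x. (\<forall>i<n. in_ivl (X i) (x i)) \<longrightarrow> attr n (circ n a) x)"
    proof (intro allI impI)
      fix a x assume ain: "\<forall>t<n. in_ivl (aI t) (a t)" and xin: "\<forall>i<n. in_ivl (X i) (x i)"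
      have ab: "lo (aI t) \<le> a t \<and> a t \<le> hi (aI t)" if t: "t < n" for t using ain t in_ivl_bounds by blast
      have xb: "lo (X m) \<le> x m \<and> x m \<le> hi (X m)" if m: "m < n" for m using xin m in_ivl_bounds by blast
      have a0: "0 \<le> a t" if t: "t < n" for t using ab[OF t] lo0[OF vA[OF t]] by linarith
      have x0: "0 \<le> x m" if m: "m < n" for m using xb[OF m] lo0[OF vX[OF m]] by linarith
      define M where "M = Max (a ` {..<n})"
      have "M \<in> a ` {..<n}" unfolding M_def by (rule Max_in) (use n in auto)
      then obtain s where s: "s < n" "a s = M" by auto
      have aM: "\<And>t. t < n \<Longrightarrow> a t \<le> M" unfolding M_def by simp
      have M0: "0 \<le> M" using a0[OF s(1)] s(2) by simp
      define a' where "a' = (\<lambda>t. if t = s then hi (aI t) else lo (aI t))"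
      have a'0: "0 \<le> a' t" if t: "t < n" for t
        using lo0[OF vA[OF t]] lohi[OF vA[OF t]] unfolding a'_def by (cases "t = s") auto
      define M' where "M' = hi (aI s)"
      have MM': "M \<le> M'" unfolding M'_def using ab[OF s(1)] s(2) by simp
      have Ma': "Max (a' ` {..<n}) = M'"
      proof (rule Max_eqI)
        show "finite (a' ` {..<n})" by simp
        show "M' \<in> a' ` {..<n}" unfolding a'_def M'_def using s(1) by force
        fix v assume "v \<in> a' ` {..<n}"
        then obtain t where t: "t < n" "v = a' t" by auto
        show "v \<le> M'"
        proof (cases "t = s")
          case True then show ?thesis using t unfolding a'_def M'_def by simp
        next
          case False
          then have "v = lo (aI t)" using t unfolding a'_def by simp
          also have "\<dots> \<le> a t" using ab[OF t(1)] by simp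
          also have "\<dots> \<le> M" by (rule aM[OF t(1)])
          finally show ?thesis using MM' by simp
        qed
      qed
      have "\<forall>r<n. M ^ (n+1) * x r \<le> pw n a (n+1) x r"
      proof (intro allI impI)
        fix r assume r: "r < n"
        define z where "z = x_corner X r"
        have z0: "0 \<le> z m" if m: "m < n" for m
          using lo0[OF vX[OF m]] lohi[OF vX[OF m]] unfolding z_def x_corner_def by (cases "m = r") auto
        have "attr n (circ n a') z" using R s(1) r unfolding A_corner_def a'_def z_def by blast
        then have Pz: "M' ^ (n+1) * z r \<le> pw n a' (n+1) z r"
          using attr_iff[OF n, of a' z] a'0 z0 r Ma' by auto
        have zr: "z r = hi (X r)" unfolding z_def x_corner_def by simp
        show "M ^ (n+1) * x r \<le> pw n a (n+1) x r"
        proof (cases "M = 0 \<or> hi (X r) = 0")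
          case True
          have p0: "0 \<le> pw n a (n+1) x r" by (rule pw_nonneg[OF n a0 x0 r])
          show ?thesis
          proof (cases "M = 0")
            case True then show ?thesis using p0 n by simp
          next
            case False
            then have "hi (X r) = 0" using \<open>M = 0 \<or> hi (X r) = 0\<close> by simp
            then have "x r = 0" using xb[OF r] lo0[OF vX[OF r]] by simp
            then show ?thesis using p0 by simp
          qed
        next
          case False
          then have Mp: "0 < M" and hp: "0 < hi (X r)" using M0 lo0[OF vX[OF r]] lohi[OF vX[OF r]] by auto
          have M'p: "0 < M'" using Mp MM' by simp
          define c where "c = x r / hi (X r)"
          have c0: "0 \<le> c" unfolding c_def using x0[OF r] hp by simp
          have c1: "c \<le> 1" unfolding c_def using xb[OF r] hp by simp
          have cx: "c * hi (X r) = x r" unfolding c_def using hp by simp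
          have cz: "\<And>m. m < n \<Longrightarrow> c * z m \<le> x m"
          proof -
            fix m assume m: "m < n"
            show "c * z m \<le> x m"
            proof (cases "m = r")
              case True then show ?thesis using cx zr by simp
            next
              case False
              then have "z m = lo (X m)" unfolding z_def x_corner_def by simp
              moreover have "c * lo (X m) \<le> lo (X m)"
                using mult_right_mono[OF c1 lo0[OF vX[OF m]]] by simp
              ultimately show ?thesis using xb[OF m] by simp
            qed
          qed
          have mono: "pw n a (n+1) (\<lambda>m. c * z m) r \<le> pw n a (n+1) x r"
            using pw_mono[where a=a and y="\<lambda>m. c * z m" and y'=x, OF n a0 _ r] cz by blast
          have hom: "pw n a (n+1) (\<lambda>m. c * z m) r = c * pw n a (n+1) z r"
            by (rule pw_hom[OF n c0 r])
          have cmp: "M ^ (n+1) * pw n a' (n+1) z r \<le> M' ^ (n+1) * pw n a (n+1) z r"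
          proof (rule pw_cmp[where a=a and a'=a' and y=z, OF n a0 a'0 M0 _ _ z0 r])
            show "0 \<le> M'" using M'p by simp
            fix k assume k: "k < n"
            show "M * a' k \<le> M' * a k"
            proof (cases "k = s")
              case True then show ?thesis unfolding a'_def M'_def using s(2) by (simp add: mult.commute)
            next
              case False
              then have "a' k = lo (aI k)" unfolding a'_def by simp
              then show ?thesis using mult_mono[OF MM' conjunct1[OF ab[OF k]] M'p[THEN less_imp_le] lo0[OF vA[OF k]]] by simp
            qed
          qed
          have "M ^ (n+1) * M' ^ (n+1) * x r = c * (M ^ (n+1) * (M' ^ (n+1) * z r))"
            using cx zr by (simp add: algebra_simps)
          also have "\<dots> \<le> c * (M ^ (n+1) * pw n a' (n+1) z r)"
            by (rule mult_left_mono[OF mult_left_mono[OF Pz]]) (use c0 M0 in auto)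
          also have "\<dots> \<le> c * (M' ^ (n+1) * pw n a (n+1) z r)"
            by (rule mult_left_mono[OF cmp c0])
          also have "\<dots> = M' ^ (n+1) * pw n a (n+1) (\<lambda>m. c * z m) r" using hom by simp
          also have "\<dots> \<le> M' ^ (n+1) * pw n a (n+1) x r"
            by (rule mult_left_mono[OF mono]) (use M'p in simp)
          finally have "M' ^ (n+1) * (M ^ (n+1) * x r) \<le> M' ^ (n+1) * pw n a (n+1) x r"
            by (simp add: algebra_simps)
          then show ?thesis using M'p by simp
        qed
      qed
      then show "attr n (circ n a) x" using attr_iff[OF n, of a x] a0 x0 unfolding M_def by blast
    qed
  qed
qed


end
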